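(* There exists a frequently hypercyclic weighted backward shift $B_w$ on $c_0(\mathbb Z_+)$ which is not $\overline{\mathcal D}_1$-transitive.
   Context: Weighted backward shift: $B_we_0=0$, $B_we_n=w_ne_{n-1}$ with $(w_n)_{n\ge1}$ bounded. Frequently hypercyclic: some $x$ has $\{n:B_w^nx\in V\}$ of positive lower density for every non-empty open $V$. $\overline{\mathcal D}_1$ is the family of subsets of $\mathbb N$ with upper density equal to $1$. An operator $T$ is $\overline{\mathcal D}_1$-transitive if for every pair of non-empty open sets $U,V$, the set $\{n\in\mathbb N: T^n(U)\cap V\ne\emptyset\}$ belongs to $\overline{\mathcal D}_1$. *)

theory Defs
  imports "HOL-Analysis.Analysis" "HOL-Library.Liminf_Limsup"
begin

definition c0 :: "(nat \<Rightarrow> complex) set" where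
  "c0 = {x. x \<longlonglongrightarrow> 0}"

definition c0_dist :: "(nat \<Rightarrow> complex) \<Rightarrow> (nat \<Rightarrow> complex) \<Rightarrow> real" where
  "c0_dist x y = (SUP n. cmod (x n - y n))"

definition c0_open :: "(nat \<Rightarrow> complex) set \<Rightarrow> bool" where
  "c0_open V \<longleftrightarrow> V \<subseteq> c0 \<and>
     (\<forall>x\<in>V. \<exists>e>0. \<forall>y\<in>c0. c0_dist x y < e \<longrightarrow> y \<in> V)"

text \<open>Weighted backward shift: B_w e_0 = 0, B_w e_n = w_n e_{n-1},
  i.e. (B_w x)_n = w_{n+1} x_{n+1}. (w 0 is irrelevant.)\<close>
definition wshift :: "(nat \<Rightarrow> complex) \<Rightarrow> (nat \<Rightarrow> complex) \<Rightarrow> (nat \<Rightarrow> complex)" where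
  "wshift w x = (\<lambda>n. w (Suc n) * x (Suc n))"

definition lower_density :: "nat set \<Rightarrow> ereal" where
  "lower_density A = liminf (\<lambda>N. ereal (real (card (A \<inter> {1..N})) / real N))"

definition upper_density :: "nat set \<Rightarrow> ereal" where
  "upper_density A = limsup (\<lambda>N. ereal (real (card (A \<inter> {1..N})) / real N))"

definition frequently_hypercyclic_c0 :: "((nat \<Rightarrow> complex) \<Rightarrow> (nat \<Rightarrow> complex)) \<Rightarrow> bool" where
  "frequently_hypercyclic_c0 T \<longleftrightarrow>
     (\<exists>x\<in>c0. \<forall>V. c0_open V \<and> V \<noteq> {} \<longrightarrow> lower_density {n. (T ^^ n) x \<in> V} > 0)"

definition upper_D1_transitive_c0 :: "((nat \<Rightarrow> complex) \<Rightarrow> (nat \<Rightarrow> complex)) \<Rightarrow> bool" where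
  "upper_D1_transitive_c0 T \<longleftrightarrow>
     (\<forall>U V. c0_open U \<and> U \<noteq> {} \<and> c0_open V \<and> V \<noteq> {} \<longrightarrow>
        upper_density {n. \<exists>x\<in>U. (T ^^ n) x \<in> V} = 1)"

end

theory Submission
  imports Defs
begin

definition rr :: "nat \<Rightarrow> nat" where "rr K = 2^(3*K+20)"
definition qq :: "nat \<Rightarrow> nat" where "qq q = 2^(2*q+14)"
definition hosts :: "nat \<Rightarrow> nat \<Rightarrow> bool" where
  "hosts K q \<longleftrightarrow> (\<exists>j. Suc K = 2^q * (2*j+1))"
definition Eset :: "nat \<Rightarrow> nat set" where
  "Eset q = {m. \<exists>K. hosts K q \<and> 6 * rr K \<le> m \<and> m + qq q \<le> 8 * rr K \<and> qq q dvd m}"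
definition Rem :: "nat set" where
  "Rem = {x. \<exists>q k. 1 \<le> k \<and> k * qq q < x + 2*q + 2 \<and> x \<le> k * qq q + q}"
definition Sset :: "nat set" where
  "Sset = {x. \<exists>K. 9 * rr K \<le> x \<and> x \<le> 11 * rr K} - Rem"

lemma rr_Suc: "rr (Suc K) = 8 * rr K"
  by (simp add: rr_def power_add mult.commute)

lemma rr_pos: "rr K > 0" by (simp add: rr_def)

lemma rr_mono: "K \<le> K' \<Longrightarrow> rr K \<le> rr K'"
  unfolding rr_def by (rule power_increasing) auto

lemma rr_mono8: "K < K' \<Longrightarrow> 8 * rr K \<le> rr K'"
proof (induction K' )
  case 0 then show ?case by simp
next
  case (Suc K')
  then show ?case
    by (cases "K = K'") (auto simp: rr_Suc)
qed


lemma two_pow_odd_inj: "2^p*(2*a+1) = 2^q*(2*b+(1::nat)) \<Longrightarrow> p = q"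
proof (induction p arbitrary: q)
  case 0
  then show ?case
    by (cases q) (auto, presburger)
next
  case (Suc p)
  then show ?case
  proof (cases q)
    case 0 with Suc.prems show ?thesis by simp presburger
  next
    case (Suc q') with Suc.prems Suc.IH show ?thesis by simp
  qed
qed

lemma hosts_unique: "hosts K p \<Longrightarrow> hosts K q \<Longrightarrow> p = q"
  unfolding hosts_def using two_pow_odd_inj by metis

lemma hosts_le: "hosts K q \<Longrightarrow> q \<le> K"
proof -
  assume "hosts K q"
  then obtain j where j: "Suc K = 2^q * (2*j+1)" by (auto simp: hosts_def)
  have "2^q \<le> Suc K" using j by simp
  moreover have "q < 2^q" by (rule less_exp)
  ultimately show ?thesis by linarith
qed

lemma cluster_unique:
  assumes "6 * rr K \<le> i" "i < 8 * rr K" "6 * rr K' \<le> i" "i < 8 * rr K'"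
  shows "K = K'"
proof (rule ccontr)
  assume "K \<noteq> K'"
  then consider "K < K'" | "K' < K" by arith
  then show False
  proof cases
    case 1 then have "8 * rr K \<le> rr K'" by (rule rr_mono8)
    with assms show False by simp
  next
    case 2 then have "8 * rr K' \<le> rr K" by (rule rr_mono8)
    with assms show False by simp
  qed
qed

lemma qq_dvd_rr: "q \<le> K \<Longrightarrow> qq q dvd rr K"
  unfolding qq_def rr_def by (rule le_imp_power_dvd) simp

lemma qq_le_rr: "q \<le> K \<Longrightarrow> qq q \<le> rr K"
  using qq_dvd_rr rr_pos by (simp add: dvd_imp_le)

lemma qq_big: "3*q + 2 < qq q"
proof -
  have a: "q < 2^q" by (rule less_exp)
  have b: "(2::nat)^q \<le> 2^(2*q+12)" by (rule power_increasing) auto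
  have c: "(2::nat)^(2*q+14) = 4 * 2^(2*q+12)" by (simp add: power_add)
  have d: "(1::nat) \<le> 2^q" by simp
  show ?thesis unfolding qq_def using a b c d by linarith
qed

lemma Eset_cluster:
  assumes "m \<in> Eset q"
  obtains K where "hosts K q" "6 * rr K \<le> m" "m + qq q \<le> 8 * rr K" "qq q dvd m"
  using assms unfolding Eset_def by blast

lemma Eset_unique:
  assumes "m \<in> Eset p" "m' \<in> Eset q" "m \<le> i" "i < m + p" "m' \<le> i" "i < m' + q"
  shows "p = q \<and> m = m'"
proof -
  obtain K where K: "hosts K p" "6 * rr K \<le> m" "m + qq p \<le> 8 * rr K" "qq p dvd m"
    using assms(1) by (rule Eset_cluster)
  obtain K' where K': "hosts K' q" "6 * rr K' \<le> m'" "m' + qq q \<le> 8 * rr K'" "qq q dvd m'"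
    using assms(2) by (rule Eset_cluster)
  have "p < qq p" "q < qq q" using qq_big[of p] qq_big[of q] by auto
  hence "K = K'" using K K' assms by (intro cluster_unique[of K i K']) auto
  hence pq: "p = q" using K K' hosts_unique by blast
  have "m = m'"
  proof (rule ccontr)
    assume "m \<noteq> m'"
    then consider "m < m'" | "m' < m" by arith
    then show False
    proof cases
      case 1
      have "qq p dvd m' - m" using K'(4) K(4) pq by (simp add: dvd_diff_nat)
      hence "qq p \<le> m' - m" using 1 by (simp add: dvd_imp_le)
      thus False using assms \<open>p < qq p\<close> 1 by linarith
    next
      case 2
      have "qq p dvd m - m'" using K'(4) K(4) pq by (simp add: dvd_diff_nat)
      hence "qq p \<le> m - m'" using 2 by (simp add: dvd_imp_le)
      thus False using assms \<open>q < qq q\<close> 2 pq by simp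
    qed
  qed
  with pq show ?thesis by simp
qed

fun Wp :: "nat \<Rightarrow> real" where
  "Wp 0 = 1" | "Wp (Suc i) = (if Suc i \<in> Sset then 1 else 2 * Wp i)"

lemma Wp_ge1: "Wp i \<ge> 1" by (induction i) auto

lemma Wp_pos: "Wp i > 0" using Wp_ge1[of i] by linarith

lemma Wp_Suc_le: "Wp (Suc i) \<le> 2 * Wp i" using Wp_ge1[of i] by auto

lemma Wp_add_le: "Wp (i + k) \<le> 2^k * Wp i"
proof (induction k)
  case 0 then show ?case by simp
next
  case (Suc k)
  have "Wp (i + Suc k) \<le> 2 * Wp (i + k)" using Wp_Suc_le[of "i+k"] by simp
  also have "... \<le> 2 * (2^k * Wp i)" using Suc by simp
  finally show ?case by simp
qed

lemma Wp_le_pow: "Wp i \<le> 2^i" using Wp_add_le[of 0 i] by simp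

lemma Wp_free:
  assumes "\<forall>x. a < x \<and> x \<le> b \<longrightarrow> x \<notin> Sset" "a \<le> b"
  shows "Wp b = 2^(b - a) * Wp a"
  using assms
proof (induction b)
  case 0 then show ?case by simp
next
  case (Suc b)
  show ?case
  proof (cases "a = Suc b")
    case True then show ?thesis by simp
  next
    case False
    hence "a \<le> b" using Suc.prems by simp
    hence ih: "Wp b = 2^(b - a) * Wp a" using Suc by auto
    have "Suc b \<notin> Sset" using Suc.prems False by auto
    hence "Wp (Suc b) = 2 * Wp b" by simp
    also have "... = 2^(Suc b - a) * Wp a" using ih \<open>a \<le> b\<close> by (simp add: Suc_diff_le)
    finally show ?thesis .
  qed
qed

lemma Wp_S: "i \<in> Sset \<Longrightarrow> Wp i = 1"
  by (cases i) auto

definition wts :: "nat \<Rightarrow> complex" where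
  "wts i = (if i = 0 then 1 else complex_of_real (Wp i / Wp (i - 1)))"

lemma wts_Suc: "wts (Suc j) = complex_of_real (Wp (Suc j) / Wp j)"
  by (simp add: wts_def del: Wp.simps)

lemma wts_norm: "norm (wts i) \<le> 2"
proof (cases i)
  case 0 then show ?thesis by (simp add: wts_def)
next
  case (Suc j)
  have "Wp (Suc j) / Wp j \<le> 2" using Wp_Suc_le[of j] Wp_pos[of j] by (simp add: divide_le_eq del: Wp.simps)
  moreover have "Wp (Suc j) / Wp j \<ge> 0" using Wp_pos[of j] Wp_pos[of "Suc j"] by simp
  moreover have "norm (wts i) = \<bar>Wp (Suc j) / Wp j\<bar>" unfolding Suc wts_Suc by (simp only: norm_of_real)
  ultimately show ?thesis by simp
qed

lemma wts_bounded: "bounded (range wts)"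
  unfolding bounded_iff using wts_norm by blast

lemma iter_formula:
  "(wshift wts ^^ k) x j = complex_of_real (Wp (j + k) / Wp j) * x (j + k)"
proof (induction k arbitrary: j)
  case 0 then show ?case using Wp_pos[of j] by simp
next
  case (Suc k)
  have "(wshift wts ^^ Suc k) x j = wts (Suc j) * ((wshift wts ^^ k) x (Suc j))"
    by (simp add: wshift_def)
  also have "... = complex_of_real (Wp (Suc j) / Wp j) *
      (complex_of_real (Wp (Suc j + k) / Wp (Suc j)) * x (Suc j + k))"
    using Suc.IH[of "Suc j"] by (simp only: wts_Suc)
  also have "... = complex_of_real (Wp (j + Suc k) / Wp j) * x (j + Suc k)"
    using Wp_pos[of "Suc j"] Wp_pos[of j] by (simp add: field_simps del: Wp.simps)
  finally show ?case .
qed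

lemma rr_gt: "K < rr K"
proof -
  have "K < 2^K" by (rule less_exp)
  also have "(2::nat)^K \<le> 2^(3*K+20)" by (rule power_increasing) auto
  finally show ?thesis by (simp add: rr_def)
qed

lemma Eset_pos: "m \<in> Eset q \<Longrightarrow> 0 < m"
proof -
  assume "m \<in> Eset q"
  then obtain K where "6 * rr K \<le> m" by (rule Eset_cluster)
  thus ?thesis using rr_pos[of K] by linarith
qed

lemma cluster_order:
  assumes "6 * rr K \<le> n" "n < 8 * rr K" "6 * rr K' \<le> m" "m < 8 * rr K'" "n < m" "K \<noteq> K'"
  shows "K < K'"
proof (rule ccontr)
  assume "\<not> K < K'"
  hence "K' < K" using assms(6) by simp
  hence "8 * rr K' \<le> rr K" by (rule rr_mono8)
  thus False using assms by simp
qed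

lemma pair_lemma:
  assumes n: "n \<in> Eset p" and m: "m \<in> Eset q" and nm: "n < m"
  shows "p + q + 2 \<le> m - n \<and> (\<forall>x. m - n < x + (p + q + 2) \<and> x < m - n + q \<longrightarrow> x \<notin> Sset)"
proof -
  obtain Kn where Kn: "hosts Kn p" "6 * rr Kn \<le> n" "n + qq p \<le> 8 * rr Kn" "qq p dvd n"
    using n by (rule Eset_cluster)
  obtain Km where Km: "hosts Km q" "6 * rr Km \<le> m" "m + qq q \<le> 8 * rr Km" "qq q dvd m"
    using m by (rule Eset_cluster)
  have qp: "0 < qq p" "0 < qq q" by (auto simp: qq_def)
  show ?thesis
  proof (cases "Kn = Km")
    case True
    hence pq: "p = q" using Kn Km hosts_unique by blast
    have dv: "qq p dvd m - n" using Kn(4) Km(4) pq by (simp add: dvd_diff_nat)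
    then obtain k where k: "m - n = qq p * k" by (auto elim: dvdE)
    have "k \<noteq> 0"
    proof
      assume "k = 0" with k nm show False by simp
    qed
    hence k1: "1 \<le> k" by simp
    have "qq p \<le> m - n" using dv nm by (simp add: dvd_imp_le)
    hence A: "p + q + 2 \<le> m - n" using qq_big[of p] pq by linarith
    have B: "x \<notin> Sset" if "m - n < x + (p + q + 2)" "x < m - n + q" for x
    proof -
      have "x \<in> Rem" unfolding Rem_def
        using k1 that k pq by (intro CollectI exI[of _ p] exI[of _ k]) (auto simp: mult.commute)
      thus ?thesis by (simp add: Sset_def)
    qed
    show ?thesis using A B by blast
  next
    case False
    have "n < 8 * rr Kn" "m < 8 * rr Km" using Kn Km qp by linarith+
    hence lt: "Kn < Km" using cluster_order[OF Kn(2) _ Km(2)] nm False by blast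
    hence n8: "n < rr Km" using rr_mono8[OF lt] \<open>n < 8 * rr Kn\<close> by linarith
    have pK: "p \<le> Km" "q \<le> Km" using hosts_le[OF Kn(1)] hosts_le[OF Km(1)] lt by auto
    have rg: "Km < rr Km" by (rule rr_gt)
    have A: "p + q + 2 \<le> m - n" using Km(2) n8 pK rg by linarith
    have B: "x \<notin> Sset" if x1: "m - n < x + (p + q + 2)" and x2: "x < m - n + q" for x
    proof
      assume "x \<in> Sset"
      then obtain J where J: "9 * rr J \<le> x" "x \<le> 11 * rr J" by (auto simp: Sset_def)
      have "x < 9 * rr Km" using x2 \<open>m < 8 * rr Km\<close> pK rg by linarith
      have "J < Km"
      proof (rule ccontr)
        assume "\<not> J < Km"
        hence "rr Km \<le> rr J" by (simp add: rr_mono)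
        thus False using J(1) \<open>x < 9 * rr Km\<close> by linarith
      qed
      hence "8 * rr J \<le> rr Km" by (rule rr_mono8)
      hence "11 * rr J < 2 * rr Km" using rr_pos[of J] by linarith
      moreover have "2 * rr Km \<le> x" using x1 Km(2) n8 pK rg by linarith
      ultimately show False using J(2) by linarith
    qed
    show ?thesis using A B by blast
  qed
qed

definition toC :: "rat \<times> rat \<Rightarrow> complex" where
  "toC r = Complex (of_rat (fst r)) (of_rat (snd r))"

definition tgt :: "nat \<Rightarrow> nat \<Rightarrow> complex" where
  "tgt q t = (let L = (from_nat (fst (prod_decode q)) :: (rat \<times> rat) list) in
     if t < length L \<and> length L \<le> q \<and> cmod (toC (L ! t)) \<le> real q then toC (L ! t) else 0)"

lemma tgt_supp: "q \<le> t \<Longrightarrow> tgt q t = 0"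
  by (auto simp: tgt_def Let_def)

lemma tgt_norm: "cmod (tgt q t) \<le> real q"
  by (auto simp: tgt_def Let_def)

definition inwin :: "nat \<Rightarrow> nat \<Rightarrow> nat \<Rightarrow> bool" where
  "inwin q m i \<longleftrightarrow> m \<in> Eset q \<and> m \<le> i \<and> i < m + q"

definition xv :: "nat \<Rightarrow> complex" where
  "xv i = (if \<exists>p. inwin (fst p) (snd p) i then
     (let p = (THE p. inwin (fst p) (snd p) i) in
        tgt (fst p) (i - snd p) * complex_of_real (Wp (i - snd p) / Wp i)) else 0)"

lemma inwin_unique: "inwin q m i \<Longrightarrow> inwin q' m' i \<Longrightarrow> q = q' \<and> m = m'"
  unfolding inwin_def using Eset_unique by blast

lemma xv_win: "inwin q m i \<Longrightarrow> xv i = tgt q (i - m) * complex_of_real (Wp (i - m) / Wp i)"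
proof -
  assume h: "inwin q m i"
  have ex: "\<exists>p. inwin (fst p) (snd p) i" using h by (intro exI[of _ "(q,m)"]) simp
  have th: "(THE p. inwin (fst p) (snd p) i) = (q, m)"
    by (rule the_equality) (use h inwin_unique in \<open>auto\<close>)
  show ?thesis unfolding xv_def using ex th by (simp add: Let_def)
qed

lemma xv_nowin: "(\<And>q m. \<not> inwin q m i) \<Longrightarrow> xv i = 0"
  unfolding xv_def by auto

lemma Eset_index_unique: "m \<in> Eset p \<Longrightarrow> m \<in> Eset q \<Longrightarrow> p = q"
proof -
  assume a: "m \<in> Eset p" "m \<in> Eset q"
  obtain K where K: "hosts K p" "6 * rr K \<le> m" "m + qq p \<le> 8 * rr K"
    using a(1) by (rule Eset_cluster)
  obtain K' where K': "hosts K' q" "6 * rr K' \<le> m" "m + qq q \<le> 8 * rr K'"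
    using a(2) by (rule Eset_cluster)
  have "0 < qq p" "0 < qq q" by (auto simp: qq_def)
  hence "K = K'" using K K' by (intro cluster_unique[of K m K']) auto
  thus ?thesis using K K' hosts_unique by blast
qed

lemma num_bound: "real q / 2^(p+q+2) \<le> 1 / (4 * (real p + 1))"
proof -
  have a: "real p + 1 \<le> 2^p"
  proof -
    have "p < 2^p" by (rule less_exp)
    hence "p + 1 \<le> (2::nat)^p" by linarith
    hence "real (p + 1) \<le> real ((2::nat)^p)" by (rule of_nat_mono)
    thus ?thesis by simp
  qed
  have b: "real q \<le> 2^q"
  proof -
    have "q < 2^q" by (rule less_exp)
    hence "real q \<le> real ((2::nat)^q)" by simp
    thus ?thesis by simp
  qed
  have "4 * (real p + 1) * real q \<le> 4 * 2^p * 2^q"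
    using a b by (intro mult_mono) auto
  also have "... = 2^(p+q+2)" by (simp add: power_add)
  finally have c: "4 * (real p + 1) * real q \<le> 2^(p+q+2)" .
  show ?thesis using c by (simp add: field_simps)
qed

lemma key_bound:
  assumes n: "n \<in> Eset p"
  shows "cmod ((wshift wts ^^ n) xv j - tgt p j) \<le> 1 / (4 * (real p + 1))"
proof -
  let ?i = "j + n"
  have it: "(wshift wts ^^ n) xv j = complex_of_real (Wp ?i / Wp j) * xv ?i"
    by (rule iter_formula)
  have pos: "0 < 1 / (4 * (real p + 1))" by simp
  show ?thesis
  proof (cases "\<exists>q m. inwin q m ?i")
    case False
    hence x0: "xv ?i = 0" using xv_nowin by blast
    have "p \<le> j"
    proof (rule ccontr)
      assume "\<not> p \<le> j"
      hence "inwin p n ?i" using n by (simp add: inwin_def)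
      thus False using False by blast
    qed
    hence "tgt p j = 0" by (rule tgt_supp)
    thus ?thesis using it x0 pos by simp
  next
    case True
    then obtain q m where w: "inwin q m ?i" by blast
    have mE: "m \<in> Eset q" "m \<le> ?i" "?i < m + q" using w by (auto simp: inwin_def)
    have xi: "xv ?i = tgt q (?i - m) * complex_of_real (Wp (?i - m) / Wp ?i)"
      by (rule xv_win[OF w])
    consider "m = n" | "n < m" | "m < n" by arith
    then show ?thesis
    proof cases
      case 1
      have "q = p" using Eset_index_unique mE(1) n 1 by blast
      have "(wshift wts ^^ n) xv j = tgt p j"
        using it xi 1 \<open>q = p\<close> Wp_pos[of j] Wp_pos[of ?i]
        by (simp add: field_simps del: Wp.simps)
      thus ?thesis using pos by simp
    next
      case 2
      define t where "t = ?i - m"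
      define d where "d = m - n"
      have jd: "j = d + t" using 2 mE unfolding t_def d_def by simp
      have tq: "t < q" using mE unfolding t_def by simp
      have pl: "p + q + 2 \<le> d \<and> (\<forall>x. d < x + (p + q + 2) \<and> x < d + q \<longrightarrow> x \<notin> Sset)"
        using pair_lemma[OF n mE(1) 2] unfolding d_def .
      have free: "\<forall>x. d - (p+q+2) < x \<and> x \<le> j \<longrightarrow> x \<notin> Sset"
        using pl jd tq by auto
      have Wj: "Wp j = 2^(j - (d - (p+q+2))) * Wp (d - (p+q+2))"
        by (rule Wp_free[OF free]) (use pl jd in auto)
      have ex: "j - (d - (p+q+2)) = p + q + 2 + t" using pl jd by simp
      have Wj2: "Wp j \<ge> 2^(p+q+2+t)"
        using Wj ex Wp_ge1[of "d - (p+q+2)"] by simp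
      have val: "(wshift wts ^^ n) xv j = tgt q t * complex_of_real (Wp t / Wp j)"
        using it xi Wp_pos[of j] Wp_pos[of ?i] unfolding t_def
        by (simp add: field_simps del: Wp.simps)
      have "p < j" using pl jd by simp
      hence tp: "tgt p j = 0" by (simp add: tgt_supp)
      have rnn: "0 \<le> Wp t / Wp j" using Wp_pos[of t] Wp_pos[of j] by simp
      have "cmod ((wshift wts ^^ n) xv j) = cmod (tgt q t) * (Wp t / Wp j)"
        unfolding val norm_mult norm_of_real using Wp_pos[of t] Wp_pos[of j] by (simp del: Wp.simps)
      also have "... \<le> real q * (2^t / 2^(p+q+2+t))"
      proof (rule mult_mono)
        show "cmod (tgt q t) \<le> real q" by (rule tgt_norm)
        show "Wp t / Wp j \<le> 2^t / 2^(p+q+2+t)"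
          using Wp_le_pow[of t] Wj2 Wp_pos[of t] Wp_pos[of j]
          by (intro frac_le) auto
      qed (use Wp_pos[of t] Wp_pos[of j] in auto)
      also have "... = real q / 2^(p+q+2)" by (simp add: power_add field_simps)
      also have "... \<le> 1 / (4 * (real p + 1))" by (rule num_bound)
      finally show ?thesis using tp by simp
    next
      case 3
      have "q + p + 2 \<le> n - m" using pair_lemma[OF mE(1) n 3] by simp
      thus ?thesis using mE 3 by simp
    qed
  qed
qed

lemma sq_pow_bound: "2 \<le> (r::nat) \<Longrightarrow> 8 * (r * r) \<le> 2^(4*r)"
proof -
  assume r: "2 \<le> r"
  have a: "r < 2^r" by (rule less_exp)
  have "r * r \<le> 2^r * 2^r" using a by (intro mult_mono) auto
  also have "... = 2^(2*r)" by (simp add: power_add[symmetric] mult_2)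
  finally have b: "r * r \<le> 2^(2*r)" .
  have "(8::nat) \<le> 2^(2*r)"
  proof -
    have "(2::nat)^3 \<le> 2^(2*r)" using r by (intro power_increasing) auto
    thus ?thesis by simp
  qed
  hence "8 * (r * r) \<le> 2^(2*r) * 2^(2*r)" using b by (intro mult_mono) auto
  also have "... = 2^(4*r)" by (simp add: power_add[symmetric])
  finally show ?thesis .
qed

lemma xv_bound: "cmod (xv i) \<le> 1 / (real i + 1)"
proof (cases "\<exists>q m. inwin q m i")
  case False
  hence "xv i = 0" using xv_nowin by blast
  thus ?thesis by simp
next
  case True
  then obtain q m where w: "inwin q m i" by blast
  have mE: "m \<in> Eset q" "m \<le> i" "i < m + q" using w by (auto simp: inwin_def)
  obtain K where K: "hosts K q" "6 * rr K \<le> m" "m + qq q \<le> 8 * rr K" "qq q dvd m"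
    using mE(1) by (rule Eset_cluster)
  let ?r = "rr K"
  have qK: "q \<le> K" by (rule hosts_le[OF K(1)])
  have Kr: "K < ?r" by (rule rr_gt)
  have i8: "i < 8 * ?r" using mE K qq_big[of q] by linarith
  have free: "\<forall>x. 2 * ?r < x \<and> x \<le> i \<longrightarrow> x \<notin> Sset"
  proof (intro allI impI)
    fix x assume x: "2 * ?r < x \<and> x \<le> i"
    show "x \<notin> Sset"
    proof
      assume "x \<in> Sset"
      then obtain J where J: "9 * rr J \<le> x" "x \<le> 11 * rr J" by (auto simp: Sset_def)
      have "J < K"
      proof (rule ccontr)
        assume "\<not> J < K"
        hence "?r \<le> rr J" by (simp add: rr_mono)
        thus False using J x i8 by linarith
      qed
      hence "8 * rr J \<le> ?r" by (rule rr_mono8)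
      thus False using J x rr_pos[of J] by linarith
    qed
  qed
  have Wi: "Wp i = 2^(i - 2 * ?r) * Wp (2 * ?r)"
    by (rule Wp_free[OF free]) (use mE K in linarith)
  have Wi2: "Wp i \<ge> 2^(i - 2 * ?r)" using Wi Wp_ge1[of "2 * ?r"] by simp
  have xi: "cmod (xv i) = cmod (tgt q (i - m)) * (Wp (i - m) / Wp i)"
    unfolding xv_win[OF w] norm_mult norm_of_real
    using Wp_pos[of "i - m"] Wp_pos[of i] by (simp del: Wp.simps)
  also have "... \<le> real q * (2^(i - m) / 2^(i - 2 * ?r))"
  proof (rule mult_mono)
    show "cmod (tgt q (i - m)) \<le> real q" by (rule tgt_norm)
    show "Wp (i - m) / Wp i \<le> 2^(i - m) / 2^(i - 2 * ?r)"
      using Wp_le_pow[of "i - m"] Wi2 Wp_pos[of "i - m"] Wp_pos[of i]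
      by (intro frac_le) auto
  qed (use Wp_pos[of "i - m"] Wp_pos[of i] in auto)
  also have "2^(i - m) / 2^(i - 2 * ?r) = (1::real) / 2^(m - 2 * ?r)"
  proof -
    have e: "i - 2 * ?r = (i - m) + (m - 2 * ?r)" using mE K by linarith
    show ?thesis unfolding e power_add by simp
  qed
  also have "real q * (1 / 2^(m - 2 * ?r)) \<le> real q * (1 / 2^(4 * ?r))"
  proof -
    have "(2::real)^(4 * ?r) \<le> 2^(m - 2 * ?r)" using K by (intro power_increasing) auto
    hence "1 / (2::real)^(m - 2 * ?r) \<le> 1 / 2^(4 * ?r)" by (intro divide_left_mono) auto
    thus ?thesis by (intro mult_left_mono) auto
  qed
  also have "... \<le> 1 / (real i + 1)"
  proof -
    have r2: "2 \<le> ?r" unfolding rr_def using power_increasing[of 1 "3*K+20" "2::nat"] by simp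
    have "q * (i + 1) \<le> ?r * (8 * ?r)" using qK Kr i8 by (intro mult_mono) auto
    also have "... = 8 * (?r * ?r)" by simp
    also have "... \<le> 2^(4 * ?r)" by (rule sq_pow_bound[OF r2])
    finally have "q * (i + 1) \<le> 2^(4 * ?r)" .
    hence "real (q * (i + 1)) \<le> real ((2::nat)^(4 * ?r))" by (rule of_nat_mono)
    hence c: "real q * (real i + 1) \<le> 2^(4 * ?r)" by (simp add: algebra_simps)
    show ?thesis using c by (simp add: field_simps)
  qed
  finally show ?thesis .
qed

lemma xv_c0: "xv \<in> c0"
proof -
  have "(\<lambda>n. inverse (real (Suc n))) \<longlonglongrightarrow> 0" by (rule LIMSEQ_inverse_real_of_nat)
  hence g: "(\<lambda>n. 1 / (real n + 1)) \<longlonglongrightarrow> 0" by (simp add: inverse_eq_divide add.commute)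
  have "xv \<longlonglongrightarrow> 0"
    by (rule Lim_null_comparison[OF _ g]) (simp add: xv_bound)
  thus ?thesis by (simp add: c0_def)
qed

lemma iter_c0: "(wshift wts ^^ n) xv \<in> c0"
proof -
  have a: "(\<lambda>j. xv (j + n)) \<longlonglongrightarrow> 0"
    using LIMSEQ_ignore_initial_segment[of xv 0 n] xv_c0 by (simp add: c0_def)
  have g: "(\<lambda>j. 2^n * norm (xv (j + n))) \<longlonglongrightarrow> 0"
    using tendsto_mult[OF tendsto_const[of "(2::real)^n"] tendsto_norm_zero[OF a]] by simp
  have b: "norm ((wshift wts ^^ n) xv j) \<le> 2^n * norm (xv (j + n))" for j
  proof -
    have "norm ((wshift wts ^^ n) xv j) = (Wp (j + n) / Wp j) * norm (xv (j + n))"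
      unfolding iter_formula norm_mult norm_of_real using Wp_pos[of j] Wp_pos[of "j+n"]
      by (simp del: Wp.simps)
    also have "... \<le> 2^n * norm (xv (j + n))"
      using Wp_add_le[of j n] Wp_pos[of j] by (intro mult_right_mono) (auto simp: divide_le_eq)
    finally show ?thesis .
  qed
  have "(wshift wts ^^ n) xv \<longlonglongrightarrow> 0"
    by (rule Lim_null_comparison[OF _ g]) (simp add: b)
  thus ?thesis by (simp add: c0_def)
qed

lemma lower_density_pos:
  assumes c: "c > 0" and h: "\<forall>N\<ge>N0. c * real N \<le> real (card (A \<inter> {1..N}))"
  shows "lower_density A > 0"
proof -
  have ev: "eventually (\<lambda>N. ereal c \<le> ereal (real (card (A \<inter> {1..N})) / real N)) sequentially"
  proof (rule eventually_sequentiallyI[of "max N0 1"])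
    fix N assume N: "max N0 1 \<le> N"
    hence "c * real N \<le> real (card (A \<inter> {1..N}))" using h by simp
    moreover have "real N > 0" using N by simp
    ultimately show "ereal c \<le> ereal (real (card (A \<inter> {1..N})) / real N)"
      by (simp add: pos_le_divide_eq)
  qed
  have "ereal c \<le> lower_density A"
    unfolding lower_density_def by (rule Liminf_bounded[OF ev])
  thus ?thesis using c by (meson ereal_less(2) less_le_trans)
qed

lemma lower_density_mono: "A \<subseteq> B \<Longrightarrow> lower_density A \<le> lower_density B"
  unfolding lower_density_def
proof (rule Liminf_mono, rule always_eventually, intro allI)
  fix N assume "A \<subseteq> B"
  hence "card (A \<inter> {1..N}) \<le> card (B \<inter> {1..N})" by (intro card_mono) auto
  thus "ereal (real (card (A \<inter> {1..N})) / real N) \<le> ereal (real (card (B \<inter> {1..N})) / real N)"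
    by (simp add: divide_right_mono)
qed

lemma upper_density_ne1:
  assumes c: "c > 0" and h: "\<forall>N\<ge>N0. real (card (A \<inter> {1..N})) \<le> (1 - c) * real N"
  shows "upper_density A \<noteq> 1"
proof -
  have ev: "eventually (\<lambda>N. ereal (real (card (A \<inter> {1..N})) / real N) \<le> ereal (1 - c)) sequentially"
  proof (rule eventually_sequentiallyI[of "max N0 1"])
    fix N assume N: "max N0 1 \<le> N"
    hence "real (card (A \<inter> {1..N})) \<le> (1 - c) * real N" using h by simp
    moreover have "real N > 0" using N by simp
    ultimately show "ereal (real (card (A \<inter> {1..N})) / real N) \<le> ereal (1 - c)"
      by (simp add: divide_le_eq)
  qed
  have "upper_density A \<le> ereal (1 - c)"
    unfolding upper_density_def by (rule Limsup_bounded[OF ev])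
  moreover have "ereal (1 - c) < 1" using c by simp
  ultimately show ?thesis by auto
qed

lemma bracket:
  fixes f :: "nat \<Rightarrow> nat"
  assumes mono: "\<And>j. f j < f (Suc j)" and N: "f 0 \<le> N"
  shows "\<exists>j. f j \<le> N \<and> N < f (Suc j)"
proof (rule ccontr)
  assume "\<not> ?thesis"
  hence step: "f j \<le> N \<Longrightarrow> f (Suc j) \<le> N" for j by (meson not_le)
  have all: "f j \<le> N" for j by (induction j) (use N step in auto)
  have ge: "j \<le> f j" for j
  proof (induction j)
    case 0 then show ?case by simp
  next
    case (Suc j) then show ?case using mono[of j] by simp
  qed
  show False using all[of "Suc N"] ge[of "Suc N"] by simp
qed

lemma rr_add: "rr (K + d) = 8^d * rr K"
  by (induction d) (simp_all add: rr_Suc)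

lemma Eset_cluster_card:
  assumes "hosts K p"
  shows "2 * rr K div qq p \<le> card (Eset p \<inter> {1..8 * rr K})"
proof -
  let ?r = "rr K" and ?Q = "qq p"
  have pK: "p \<le> K" by (rule hosts_le[OF assms])
  have dv: "?Q dvd ?r" by (rule qq_dvd_rr[OF pK])
  have Qp: "0 < ?Q" by (simp add: qq_def)
  define f where "f k = 6 * ?r + k * ?Q" for k
  have inj: "inj_on f {..< 2 * ?r div ?Q}" unfolding f_def inj_on_def using Qp by simp
  have sub: "f ` {..< 2 * ?r div ?Q} \<subseteq> Eset p \<inter> {1..8 * ?r}"
  proof
    fix m assume "m \<in> f ` {..< 2 * ?r div ?Q}"
    then obtain k where k: "k < 2 * ?r div ?Q" and m: "m = f k" by auto
    have "Suc k \<le> 2 * ?r div ?Q" using k by simp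
    hence "Suc k * ?Q \<le> 2 * ?r div ?Q * ?Q" by (rule mult_right_mono) simp
    also have "... = 2 * ?r" using dv by simp
    finally have a: "k * ?Q + ?Q \<le> 2 * ?r" by simp
    have b: "?Q dvd m" using dv unfolding m f_def by simp
    have "m \<in> Eset p" unfolding Eset_def using assms a b unfolding m f_def by auto
    moreover have "1 \<le> m" "m \<le> 8 * ?r" using a rr_pos[of K] Qp unfolding m f_def by linarith+
    ultimately show "m \<in> Eset p \<inter> {1..8 * ?r}" by simp
  qed
  have "2 * ?r div ?Q = card (f ` {..< 2 * ?r div ?Q})" using card_image[OF inj] by simp
  also have "... \<le> card (Eset p \<inter> {1..8 * ?r})" by (rule card_mono[OF _ sub]) simp
  finally show ?thesis .
qed

lemma Eset_density: "lower_density (Eset p) > 0"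
proof -
  define Kj :: "nat \<Rightarrow> nat" where "Kj j = 2^p * (2*j+1) - 1" for j
  have hK: "hosts (Kj j) p" for j
  proof -
    have "Suc (Kj j) = 2^p * (2*j+1)" unfolding Kj_def by (simp add: Suc_diff_le)
    thus ?thesis unfolding hosts_def by blast
  qed
  have Ksuc: "Kj (Suc j) = Kj j + 2^(p+1)" for j
  proof -
    have "2^p * (2*j+1) \<ge> (1::nat)" by (simp add: Suc_le_eq)
    thus ?thesis unfolding Kj_def by (simp add: algebra_simps)
  qed
  define C where "C = (8::nat)^(2^(p+1))"
  have Cpos: "0 < C" by (simp add: C_def)
  have rsuc: "rr (Kj (Suc j)) = C * rr (Kj j)" for j unfolding Ksuc rr_add C_def by simp
  define f where "f j = 8 * rr (Kj j)" for j
  have fmono: "f j < f (Suc j)" for j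
  proof -
    have "1 < C" unfolding C_def by (intro one_less_power) auto
    thus ?thesis unfolding f_def rsuc using rr_pos[of "Kj j"] by simp
  qed
  define c where "c = 1 / (4 * real (qq p) * real C)"
  have c: "c > 0" unfolding c_def using Cpos by (simp add: qq_def)
  have "\<forall>N\<ge>f 0. c * real N \<le> real (card (Eset p \<inter> {1..N}))"
  proof (intro allI impI)
    fix N assume N: "f 0 \<le> N"
    obtain j where j: "f j \<le> N" "N < f (Suc j)" using bracket[OF fmono N] by blast
    let ?r = "rr (Kj j)"
    have dv: "qq p dvd 2 * ?r" using qq_dvd_rr[OF hosts_le[OF hK[of j]]] by simp
    have "2 * ?r div qq p \<le> card (Eset p \<inter> {1..8 * ?r})" by (rule Eset_cluster_card[OF hK])
    also have "... \<le> card (Eset p \<inter> {1..N})" using j(1) unfolding f_def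
      by (intro card_mono) auto
    finally have cd: "2 * ?r div qq p \<le> card (Eset p \<inter> {1..N})" .
    have "real (2 * ?r div qq p) = 2 * real ?r / real (qq p)" using dv by (simp add: real_of_nat_div)
    hence cd2: "2 * real ?r / real (qq p) \<le> real (card (Eset p \<inter> {1..N}))" using cd
      by (metis of_nat_le_iff)
    have "real N < 8 * real C * real ?r" using j(2) unfolding f_def rsuc
      by (metis of_nat_less_iff of_nat_mult of_nat_numeral mult.assoc)
    hence "c * real N \<le> c * (8 * real C * real ?r)" using c by simp
    also have "... = 2 * real ?r / real (qq p)" unfolding c_def using Cpos by (simp add: qq_def field_simps)
    finally show "c * real N \<le> real (card (Eset p \<inter> {1..N}))" using cd2 by linarith
  qed
  thus ?thesis by (rule lower_density_pos[OF c])
qed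

lemma three_q_bound: "3 * q + 2 \<le> 4 * (2::nat)^q"
proof (induction q)
  case 0 then show ?case by simp
next
  case (Suc q)
  have "(1::nat) \<le> 2^q" by simp
  hence "3 * q + 5 \<le> 8 * (2::nat)^q" using Suc.IH by linarith
  thus ?case by simp
qed

lemma card_mult_range:
  assumes Q: "0 < (Q::nat)"
  shows "card {k. a \<le> k * Q \<and> k * Q \<le> b} \<le> (b - a) div Q + 2"
proof (cases "a \<le> b")
  case False
  have e: "{k. a \<le> k * Q \<and> k * Q \<le> b} = {}" using False by auto
  show ?thesis by (subst e) simp
next
  case True
  have sub: "{k. a \<le> k * Q \<and> k * Q \<le> b} \<subseteq> {a div Q .. b div Q}"
  proof
    fix k assume k: "k \<in> {k. a \<le> k * Q \<and> k * Q \<le> b}"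
    have "a div Q \<le> k * Q div Q" using k div_le_mono[of a "k*Q" Q] by simp
    moreover have "k * Q div Q \<le> b div Q" using k div_le_mono[of "k*Q" b Q] by simp
    ultimately show "k \<in> {a div Q .. b div Q}" using Q by simp
  qed
  have "card {k. a \<le> k * Q \<and> k * Q \<le> b} \<le> card {a div Q .. b div Q}"
    by (rule card_mono[OF _ sub]) simp
  also have "... = b div Q + 1 - a div Q" by simp
  also have "... \<le> (b - a) div Q + 2"
  proof -
    have "b = (b - a) + a" using True by simp
    hence "b div Q = ((b - a) + a) div Q" by simp
    also have "... \<le> (b - a) div Q + a div Q + 1"
    proof -
      have "((b - a) + a) div Q = (b - a) div Q + a div Q + ((b - a) mod Q + a mod Q) div Q"
        by (rule div_add1_eq)
      moreover have "((b - a) mod Q + a mod Q) div Q \<le> 1"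
      proof -
        have "(b - a) mod Q + a mod Q < 2 * Q"
          using mod_less_divisor[OF Q, of "b - a"] mod_less_divisor[OF Q, of a] by linarith
        hence "((b - a) mod Q + a mod Q) div Q < 2" using Q by (simp add: less_mult_imp_div_less)
        thus ?thesis by simp
      qed
      ultimately show ?thesis by simp
    qed
    finally show ?thesis by simp
  qed
  finally show ?thesis .
qed

lemma qq_huge:
  assumes "2 * K + 6 \<le> q"
  shows "11 * rr K + 2 * q + 2 \<le> qq q"
proof -
  have a: "(2::nat)^(4*K+25) \<le> 2^(2*q+13)" using assms by (intro power_increasing) auto
  have b: "(2::nat)^(4*K+25) = 2^(K+5) * rr K" by (simp add: rr_def power_add[symmetric])
  have c: "(32::nat) \<le> 2^(K+5)"
  proof -
    have "(2::nat)^5 \<le> 2^(K+5)" by (intro power_increasing) auto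
    thus ?thesis by simp
  qed
  have d: "11 * rr K \<le> 2^(K+5) * rr K" using c by (intro mult_right_mono) auto
  have e: "2 * q + 2 \<le> (2::nat)^(2*q+13)"
  proof -
    have "2*q + 2 < qq q" using qq_big[of q] by linarith
    hence "2*q+2 < 2 * 2^(2*q+13)" by (simp add: qq_def power_add)
    moreover have "2 * q + 2 \<le> 2^(2*q+2)"
    proof -
      have "q + 1 \<le> 2^q" using less_exp[of q] by linarith
      hence "2*q+2 \<le> 2 * 2^q" by linarith
      also have "... = 2^(q+1)" by simp
      also have "... \<le> 2^(2*q+2)" by (intro power_increasing) auto
      finally show ?thesis .
    qed
    moreover have "(2::nat)^(2*q+2) \<le> 2^(2*q+13)" by (intro power_increasing) auto
    ultimately show ?thesis by linarith
  qed
  have "qq q = 2^(2*q+13) + 2^(2*q+13)" by (simp add: qq_def power_add)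
  thus ?thesis using a b d e by linarith
qed

lemma aux_field: "(a::real) > 0 \<Longrightarrow> (2 * r) / (a * a * c) * (4 * a) = r / (c/8) * (1 / a)"
  by (simp add: field_simps)

lemma aux_field2: "(r::real) / (2^14/8) * 2 = r / 2^10"
  by simp

lemma aux_field3: "(0::real) \<le> r \<Longrightarrow> r / 2^10 + r / 2 \<le> r"
  by simp

lemma geo_half: "(\<Sum>q<n. (1/2::real)^q) = 2 - 2 * (1/2)^n"
  by (induction n) simp_all

lemma Rem_window_card: "real (card (Rem \<inter> {9 * rr K .. 11 * rr K})) \<le> real (rr K)"
proof -
  let ?r = "rr K" and ?n = "2 * K + 6"
  define KS where "KS q = {k. 9 * ?r - q \<le> k * qq q \<and> k * qq q \<le> 11 * ?r + 2 * q + 1}" for q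
  define B where "B q = (\<lambda>(k,off). k * qq q + off - (2 * q + 1)) ` (KS q \<times> {..< 3 * q + 2})" for q
  have finKS: "finite (KS q)" for q
  proof -
    have "KS q \<subseteq> {..11 * ?r + 2 * q + 1}"
    proof
      fix k assume "k \<in> KS q"
      hence "k * qq q \<le> 11 * ?r + 2 * q + 1" by (simp add: KS_def)
      moreover have "k \<le> k * qq q"
      proof -
        have "1 \<le> qq q" using qq_big[of q] by linarith
        hence "k * 1 \<le> k * qq q" by (rule mult_le_mono2)
        thus ?thesis by simp
      qed
      ultimately have "k \<le> 11 * ?r + 2 * q + 1" by linarith
      thus "k \<in> {..11 * ?r + 2 * q + 1}" by simp
    qed
    thus ?thesis by (rule finite_subset) simp
  qed
  have finB: "finite (B q)" for q unfolding B_def using finKS by simp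
  have cover: "Rem \<inter> {9 * ?r .. 11 * ?r} \<subseteq> (\<Union>q<?n. B q)"
  proof
    fix x assume x: "x \<in> Rem \<inter> {9 * ?r .. 11 * ?r}"
    then obtain q k where k: "1 \<le> k" "k * qq q < x + 2*q + 2" "x \<le> k * qq q + q"
      by (auto simp: Rem_def)
    have xI: "9 * ?r \<le> x" "x \<le> 11 * ?r" using x by auto
    have qn: "q < ?n"
    proof (rule ccontr)
      assume "\<not> q < ?n"
      hence "11 * ?r + 2 * q + 2 \<le> qq q" using qq_huge by simp
      moreover have "qq q \<le> k * qq q" using k(1) by simp
      ultimately show False using k(2) xI by linarith
    qed
    have kK: "k \<in> KS q" unfolding KS_def using k xI by auto
    define off where "off = x + 2 * q + 1 - k * qq q"
    have o: "off < 3 * q + 2" unfolding off_def using k by linarith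
    have xo: "x = k * qq q + off - (2 * q + 1)" unfolding off_def using k by linarith
    have "x \<in> B q" unfolding B_def using kK o xo by (intro image_eqI[of _ _ "(k,off)"]) auto
    thus "x \<in> (\<Union>q<?n. B q)" using qn by blast
  qed
  have cardKS: "card (KS q) \<le> 2 * ?r div qq q + 3" if "q < ?n" for q
  proof -
    have Qp: "0 < qq q" by (simp add: qq_def)
    have "card (KS q) \<le> (11 * ?r + 2 * q + 1 - (9 * ?r - q)) div qq q + 2"
      unfolding KS_def by (rule card_mult_range[OF Qp])
    also have "11 * ?r + 2 * q + 1 - (9 * ?r - q) = 2 * ?r + (3 * q + 1)"
    proof -
      have "q \<le> 9 * ?r" using that rr_gt[of K] by linarith
      thus ?thesis by simp
    qed
    also have "(2 * ?r + (3 * q + 1)) div qq q \<le> 2 * ?r div qq q + 1"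
    proof -
      have "(2 * ?r + (3 * q + 1)) div qq q = 2 * ?r div qq q + (3 * q + 1) div qq q
          + ((2 * ?r) mod qq q + (3 * q + 1) mod qq q) div qq q" by (rule div_add1_eq)
      moreover have "(3 * q + 1) div qq q = 0" using qq_big[of q] by simp
      moreover have "((2 * ?r) mod qq q + (3 * q + 1) mod qq q) div qq q \<le> 1"
      proof -
        have "(2 * ?r) mod qq q + (3 * q + 1) mod qq q < 2 * qq q"
          using mod_less_divisor[OF Qp, of "2 * ?r"] mod_less_divisor[OF Qp, of "3 * q + 1"] by linarith
        hence "((2 * ?r) mod qq q + (3 * q + 1) mod qq q) div qq q < 2"
          using Qp by (simp add: less_mult_imp_div_less)
        thus ?thesis by simp
      qed
      ultimately show ?thesis by simp
    qed
    finally show ?thesis by simp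
  qed
  have cardB: "card (B q) \<le> (2 * ?r div qq q + 3) * (3 * q + 2)" if "q < ?n" for q
  proof -
    have "card (B q) \<le> card (KS q \<times> {..< 3 * q + 2})" unfolding B_def by (rule card_image_le) (simp add: finKS)
    also have "... = card (KS q) * (3 * q + 2)" by (simp add: card_cartesian_product)
    also have "... \<le> (2 * ?r div qq q + 3) * (3 * q + 2)" using cardKS[OF that] by (rule mult_le_mono1)
    finally show ?thesis .
  qed
  have "card (Rem \<inter> {9 * ?r .. 11 * ?r}) \<le> card (\<Union>q<?n. B q)"
    by (rule card_mono[OF _ cover]) (simp add: finB)
  also have "... \<le> (\<Sum>q<?n. card (B q))" by (rule card_UN_le) simp
  also have "... \<le> (\<Sum>q<?n. (2 * ?r div qq q + 3) * (3 * q + 2))" by (rule sum_mono) (rule cardB, simp)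
  finally have c0: "card (Rem \<inter> {9 * ?r .. 11 * ?r}) \<le> (\<Sum>q<?n. (2 * ?r div qq q + 3) * (3 * q + 2))" .
  have c1: "real (card (Rem \<inter> {9 * ?r .. 11 * ?r})) \<le> (\<Sum>q<?n. real ((2 * ?r div qq q + 3) * (3 * q + 2)))"
    using of_nat_mono[OF c0] unfolding of_nat_sum .
  have t1: "real ((2 * ?r div qq q + 3) * (3 * q + 2)) \<le> real ?r / (2^14/8) * (1/2)^q + real (3 * (3 * q + 2))" for q
  proof -
    have d1: "real (2 * ?r div qq q) \<le> real (2 * ?r) / real (qq q)" by (rule of_nat_div_le_of_nat)
    have Qe: "real (qq q) = 2^q * 2^q * (2::real)^14"
      by (simp only: qq_def of_nat_power of_nat_numeral power_add mult_2 of_nat_mult)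
    have "real (2 * ?r div qq q) * real (3 * q + 2) \<le> real (2 * ?r) / real (qq q) * real (3 * q + 2)"
      using d1 by (intro mult_right_mono) auto
    also have "... \<le> real (2 * ?r) / real (qq q) * (4 * 2^q)"
    proof -
      have "real (3 * q + 2) \<le> real (4 * (2::nat)^q)" using three_q_bound[of q] by (rule of_nat_mono)
      hence "real (3 * q + 2) \<le> 4 * 2^q" by simp
      thus ?thesis by (intro mult_left_mono) (auto simp: qq_def)
    qed
    also have "... = real ?r / (2^14/8) * (1/2)^q"
    proof -
      have p: "(1/2::real)^q = 1 / 2^q" by (simp add: power_one_over)
      show ?thesis unfolding Qe p of_nat_mult of_nat_numeral by (rule aux_field) simp
    qed
    finally have "real (2 * ?r div qq q) * real (3 * q + 2) \<le> real ?r / (2^14/8) * (1/2)^q" .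
    thus ?thesis by (simp add: algebra_simps)
  qed
  have s1: "(\<Sum>q<?n. real ((2 * ?r div qq q + 3) * (3 * q + 2))) \<le>
        (\<Sum>q<?n. real ?r / (2^14/8) * (1/2)^q) + (\<Sum>q<?n. real (3 * (3 * q + 2)))"
    unfolding sum.distrib[symmetric] by (rule sum_mono) (rule t1)
  have s2: "(\<Sum>q<?n. real ?r / (2^14/8) * (1/2)^q) \<le> real ?r / 2^10"
  proof -
    have "(\<Sum>q<?n. (1/2::real)^q) \<le> 2"
    proof -
      have "(\<Sum>q<?n. (1/2::real)^q) = 2 - 2 * (1/2)^?n" by (rule geo_half)
      thus ?thesis by simp
    qed
    hence "(\<Sum>q<?n. real ?r / (2^14/8) * (1/2)^q) \<le> real ?r / (2^14/8) * 2"
      unfolding sum_distrib_left[symmetric] by (intro mult_left_mono) auto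
    also have "real ?r / (2^14/8) * 2 = real ?r / 2^10" by (rule aux_field2)
    finally show ?thesis .
  qed
  have s3: "(\<Sum>q<?n. real (3 * (3 * q + 2))) \<le> real ?r / 2"
  proof -
    have "(\<Sum>q<?n. 3 * (3 * q + 2)) \<le> (\<Sum>q<?n. 18 * K + 60)"
      by (rule sum_mono) simp
    also have "... = (2 * K + 6) * (18 * K + 60)" by simp
    also have "... \<le> 2^(K+3) * 2^(K+7)"
    proof (rule mult_mono)
      have k1: "K < 2^K" by (rule less_exp)
      have k2: "(1::nat) \<le> 2^K" by simp
      have e1: "(2::nat)^(K+3) = 8 * 2^K" by (simp add: power_add)
      have e2: "(2::nat)^(K+7) = 128 * 2^K" by (simp add: power_add)
      show "2 * K + 6 \<le> (2::nat)^(K+3)" using k1 k2 e1 by linarith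
      show "18 * K + 60 \<le> (2::nat)^(K+7)" using k1 k2 e2 by linarith
    qed auto
    also have "... = 2^(2*K+10)" by (simp add: power_add[symmetric])
    also have "... \<le> 2^(3*K+19)" by (intro power_increasing) auto
    also have "... * 2 = ?r" by (simp add: rr_def power_add[symmetric]) (simp add: power_add)
    finally have "(\<Sum>q<?n. 3 * (3 * q + 2)) * 2 \<le> ?r" by simp
    hence "real ((\<Sum>q<?n. 3 * (3 * q + 2)) * 2) \<le> real ?r" by (rule of_nat_mono)
    thus ?thesis by (simp add: of_nat_sum)
  qed
  have "(\<Sum>q<?n. real ((2 * ?r div qq q + 3) * (3 * q + 2))) \<le> real ?r / 2^10 + real ?r / 2"
    using s1 s2 s3 by linarith
  moreover have "real ?r / 2^10 + real ?r / 2 \<le> real ?r" by (rule aux_field3) simp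
  ultimately show ?thesis using c1 by linarith
qed

lemma Sset_window_card: "rr K \<le> card (Sset \<inter> {9 * rr K .. 11 * rr K})"
proof -
  let ?r = "rr K" and ?I = "{9 * rr K .. 11 * rr K}"
  have eq: "Sset \<inter> ?I = ?I - Rem" unfolding Sset_def by auto
  have c: "card (?I - Rem) = card ?I - card (?I \<inter> Rem)"
    by (rule card_Diff_subset_Int) simp
  have "real (card (?I \<inter> Rem)) \<le> real ?r" using Rem_window_card[of K] by (simp add: Int_commute)
  hence "card (?I \<inter> Rem) \<le> ?r" by simp
  moreover have "card ?I = 2 * ?r + 1" by simp
  ultimately show ?thesis unfolding eq c by linarith
qed

lemma Sset_density: "\<forall>N\<ge>11 * rr 0. (1/88) * real N \<le> real (card (Sset \<inter> {1..N}))"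
proof (intro allI impI)
  fix N assume N: "11 * rr 0 \<le> N"
  define f where "f K = 11 * rr K" for K
  have fm: "f K < f (Suc K)" for K unfolding f_def rr_Suc using rr_pos[of K] by simp
  obtain K where K: "f K \<le> N" "N < f (Suc K)" using bracket[of f N, OF fm] N unfolding f_def by auto
  have "rr K \<le> card (Sset \<inter> {9 * rr K .. 11 * rr K})" by (rule Sset_window_card)
  also have "... \<le> card (Sset \<inter> {1..N})"
    using K(1) rr_pos[of K] unfolding f_def by (intro card_mono) auto
  finally have a: "rr K \<le> card (Sset \<inter> {1..N})" .
  have "N < 88 * rr K" using K(2) unfolding f_def rr_Suc by simp
  hence "real N < 88 * real (rr K)" by linarith
  moreover have "real (rr K) \<le> real (card (Sset \<inter> {1..N}))" using a by simp
  ultimately show "(1/88) * real N \<le> real (card (Sset \<inter> {1..N}))" by linarith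
qed

lemma rat_approx_complex: "e > 0 \<Longrightarrow> \<exists>r. cmod (toC r - z) \<le> e"
proof -
  assume e: "e > 0"
  obtain a where a: "a \<in> \<rat>" "Re z - e/2 < a" "a < Re z + e/2"
    using Rats_dense_in_real[of "Re z - e/2" "Re z + e/2"] e by auto
  obtain b where b: "b \<in> \<rat>" "Im z - e/2 < b" "b < Im z + e/2"
    using Rats_dense_in_real[of "Im z - e/2" "Im z + e/2"] e by auto
  obtain a' where a': "a = of_rat a'" using a(1) by (auto elim: Rats_cases)
  obtain b' where b': "b = of_rat b'" using b(1) by (auto elim: Rats_cases)
  have "cmod (toC (a', b') - z) \<le> \<bar>Re (toC (a', b') - z)\<bar> + \<bar>Im (toC (a', b') - z)\<bar>"
    by (rule cmod_le)
  also have "... = \<bar>a - Re z\<bar> + \<bar>b - Im z\<bar>" by (simp add: toC_def a' b')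
  also have "... \<le> e" using a b by linarith
  finally show ?thesis by blast
qed

lemma tgt_dense:
  assumes v: "v \<in> c0" and e: "e > 0"
  shows "\<exists>q. (\<forall>t. cmod (tgt q t - v t) \<le> e) \<and> 1 / (4 * (real q + 1)) \<le> e"
proof -
  have "v \<longlonglongrightarrow> 0" using v by (simp add: c0_def)
  hence "eventually (\<lambda>t. dist (v t) 0 < e) sequentially" using e by (rule tendstoD)
  then obtain T where T: "\<And>t. T \<le> t \<Longrightarrow> cmod (v t) < e" by (auto simp: eventually_sequentially)
  have "\<forall>t. \<exists>r. cmod (toC r - v t) \<le> e" using rat_approx_complex[OF e] by blast
  then obtain rf where rf: "\<And>t. cmod (toC (rf t) - v t) \<le> e" by metis
  define L where "L = map rf [0..<T]"
  define Bnd where "Bnd = (\<Sum>t<T. cmod (toC (rf t)))"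
  define j where "j = T + nat \<lceil>Bnd\<rceil> + nat \<lceil>1/e\<rceil>"
  define q where "q = prod_encode (to_nat L, j)"
  have jq: "j \<le> q" unfolding q_def by (rule le_prod_encode_2)
  have Lq: "from_nat (fst (prod_decode q)) = L" unfolding q_def by simp
  have lenL: "length L = T" unfolding L_def by simp
  have Tq: "T \<le> q" using jq unfolding j_def by simp
  have Bq: "Bnd \<le> real q"
  proof -
    have "Bnd \<le> real (nat \<lceil>Bnd\<rceil>)" by linarith
    also have "... \<le> real j" unfolding j_def by simp
    also have "... \<le> real q" using jq by simp
    finally show ?thesis .
  qed
  have eq: "real q \<ge> 1 / e"
  proof -
    have "1/e \<le> real (nat \<lceil>1/e\<rceil>)" by linarith
    also have "... \<le> real j" unfolding j_def by simp
    also have "... \<le> real q" using jq by simp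
    finally show ?thesis .
  qed
  have A: "cmod (tgt q t - v t) \<le> e" for t
  proof (cases "t < T")
    case True
    have nt: "cmod (toC (rf t)) \<le> Bnd"
      unfolding Bnd_def using True by (intro member_le_sum) auto
    have "tgt q t = toC (rf t)"
      unfolding tgt_def Let_def Lq using True lenL Tq nt Bq by (simp add: L_def)
    thus ?thesis using rf[of t] by simp
  next
    case False
    have "tgt q t = 0" unfolding tgt_def Let_def Lq using False lenL by simp
    thus ?thesis using T[of t] False by simp
  qed
  have B: "1 / (4 * (real q + 1)) \<le> e"
  proof -
    have "real q \<le> 4 * (real q + 1)" by simp
    hence "1 / e \<le> 4 * (real q + 1)" using eq by (rule order.trans[rotated])
    thus ?thesis using e by (simp add: divide_le_eq field_simps)
  qed
  show ?thesis using A B by blast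
qed

lemma c0_bdd:
  assumes "x \<in> c0" "y \<in> c0"
  shows "bdd_above (range (\<lambda>n. cmod (x n - y n)))"
proof -
  have "(\<lambda>n. x n - y n) \<longlonglongrightarrow> 0 - 0" using assms by (intro tendsto_diff) (auto simp: c0_def)
  hence "convergent (\<lambda>n. x n - y n)" by (auto simp: convergent_def)
  hence "Bseq (\<lambda>n. x n - y n)" by (rule convergent_imp_Bseq)
  then obtain K where "\<forall>n. norm (x n - y n) \<le> K" by (auto simp: Bseq_def)
  thus ?thesis by (auto intro: bdd_aboveI2)
qed

lemma c0_dist_ge: "x \<in> c0 \<Longrightarrow> y \<in> c0 \<Longrightarrow> cmod (x n - y n) \<le> c0_dist x y"
  unfolding c0_dist_def by (rule cSUP_upper[OF _ c0_bdd]) auto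

lemma c0_dist_le: "(\<And>n. cmod (x n - y n) \<le> e) \<Longrightarrow> c0_dist x y \<le> e"
  unfolding c0_dist_def by (rule cSUP_least) auto

lemma c0_tri:
  assumes "x \<in> c0" "y \<in> c0" "z \<in> c0"
  shows "c0_dist x z \<le> c0_dist x y + c0_dist y z"
proof (rule c0_dist_le)
  fix n
  have "x n - z n = (x n - y n) + (y n - z n)" by simp
  hence "cmod (x n - z n) \<le> cmod (x n - y n) + cmod (y n - z n)" by (metis norm_triangle_ineq)
  also have "... \<le> c0_dist x y + c0_dist y z"
    using c0_dist_ge[OF assms(1,2)] c0_dist_ge[OF assms(2,3)] by (intro add_mono)
  finally show "cmod (x n - z n) \<le> c0_dist x y + c0_dist y z" .
qed

lemma fhc: "frequently_hypercyclic_c0 (wshift wts)"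
  unfolding frequently_hypercyclic_c0_def
proof (intro bexI[of _ xv] allI impI)
  show "xv \<in> c0" by (rule xv_c0)
  fix V assume V: "c0_open V \<and> V \<noteq> {}"
  then obtain v where v: "v \<in> V" by blast
  have vc: "v \<in> c0" using V v by (auto simp: c0_open_def)
  obtain e where e: "e > 0" "\<And>y. y \<in> c0 \<Longrightarrow> c0_dist v y < e \<Longrightarrow> y \<in> V"
    using V v unfolding c0_open_def by blast
  obtain q where q: "\<And>t. cmod (tgt q t - v t) \<le> e/4" "1 / (4 * (real q + 1)) \<le> e/4"
    using tgt_dense[OF vc, of "e/4"] e(1) by auto
  have sub: "Eset q \<subseteq> {n. (wshift wts ^^ n) xv \<in> V}"
  proof
    fix n assume n: "n \<in> Eset q"
    have "c0_dist v ((wshift wts ^^ n) xv) \<le> e/2"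
    proof (rule c0_dist_le)
      fix j
      have "cmod (v j - (wshift wts ^^ n) xv j) \<le> cmod (tgt q j - v j) + cmod ((wshift wts ^^ n) xv j - tgt q j)"
        by (metis add.commute norm_diff_triangle_le norm_minus_commute order_refl)
      also have "... \<le> e/4 + e/4" using q(1)[of j] key_bound[OF n, of j] q(2) by linarith
      finally show "cmod (v j - (wshift wts ^^ n) xv j) \<le> e/2" by simp
    qed
    hence "c0_dist v ((wshift wts ^^ n) xv) < e" using e(1) by linarith
    thus "n \<in> {n. (wshift wts ^^ n) xv \<in> V}" using e(2) iter_c0 by blast
  qed
  have "0 < lower_density (Eset q)" by (rule Eset_density)
  also have "... \<le> lower_density {n. (wshift wts ^^ n) xv \<in> V}" by (rule lower_density_mono[OF sub])
  finally show "0 < lower_density {n. (wshift wts ^^ n) xv \<in> V}" .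
qed

definition e0 :: "nat \<Rightarrow> complex" where "e0 n = (if n = 0 then 1 else 0)"

lemma e0_c0: "e0 \<in> c0"
proof -
  have "eventually (\<lambda>n. e0 n = 0) sequentially"
    by (rule eventually_sequentiallyI[of 1]) (simp add: e0_def)
  hence "e0 \<longlonglongrightarrow> 0" by (rule tendsto_eventually)
  thus ?thesis by (simp add: c0_def)
qed

definition U0 :: "(nat \<Rightarrow> complex) set" where "U0 = {z \<in> c0. c0_dist e0 z < 1/3}"

lemma U0_open: "c0_open U0"
  unfolding c0_open_def
proof (intro conjI ballI)
  show "U0 \<subseteq> c0" by (auto simp: U0_def)
  fix z assume z: "z \<in> U0"
  have zc: "z \<in> c0" and zd: "c0_dist e0 z < 1/3" using z by (auto simp: U0_def)
  show "\<exists>e>0. \<forall>y\<in>c0. c0_dist z y < e \<longrightarrow> y \<in> U0"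
  proof (intro exI[of _ "1/3 - c0_dist e0 z"] conjI ballI impI)
    show "0 < 1/3 - c0_dist e0 z" using zd by simp
    fix y assume y: "y \<in> c0" "c0_dist z y < 1/3 - c0_dist e0 z"
    have "c0_dist e0 y \<le> c0_dist e0 z + c0_dist z y" by (rule c0_tri[OF e0_c0 zc y(1)])
    thus "y \<in> U0" using y by (simp add: U0_def)
  qed
qed

lemma U0_ne: "U0 \<noteq> {}"
proof -
  have "c0_dist e0 e0 \<le> 0" by (rule c0_dist_le) simp
  hence "e0 \<in> U0" using e0_c0 by (simp add: U0_def)
  thus ?thesis by blast
qed

lemma U0_avoid:
  assumes n: "n \<in> Sset" and x: "x \<in> U0" and bx: "(wshift wts ^^ n) x \<in> U0"
  shows False
proof -
  have n0: "n \<noteq> 0"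
  proof -
    obtain K where "9 * rr K \<le> n" using n by (auto simp: Sset_def)
    thus ?thesis using rr_pos[of K] by linarith
  qed
  have xc: "x \<in> c0" and xd: "c0_dist e0 x < 1/3" using x by (auto simp: U0_def)
  have bc: "(wshift wts ^^ n) x \<in> c0" and bd: "c0_dist e0 ((wshift wts ^^ n) x) < 1/3"
    using bx by (auto simp: U0_def)
  have a: "cmod (e0 n - x n) < 1/3" using c0_dist_ge[OF e0_c0 xc, of n] xd by linarith
  have "(wshift wts ^^ n) x 0 = x n"
    using iter_formula[of n x 0] Wp_S[OF n] by simp
  hence b: "cmod (1 - x n) < 1/3" using c0_dist_ge[OF e0_c0 bc, of 0] bd by (simp add: e0_def)
  have a': "cmod (x n) < 1/3" using a n0 by (simp add: e0_def)
  have "(1::complex) = (1 - x n) + x n" by simp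
  hence "cmod (1::complex) \<le> cmod (1 - x n) + cmod (x n)" by (metis norm_triangle_ineq)
  thus False using a' b by simp
qed

lemma not_d1: "\<not> upper_D1_transitive_c0 (wshift wts)"
proof -
  let ?N = "{n. \<exists>x\<in>U0. (wshift wts ^^ n) x \<in> U0}"
  have h: "\<forall>M\<ge>11 * rr 0. real (card (?N \<inter> {1..M})) \<le> (1 - 1/88) * real M"
  proof (intro allI impI)
    fix M assume M: "11 * rr 0 \<le> M"
    have sub: "?N \<inter> {1..M} \<subseteq> {1..M} - Sset" using U0_avoid by blast
    have "card (?N \<inter> {1..M}) \<le> card ({1..M} - Sset)" by (rule card_mono[OF _ sub]) simp
    also have "... = card {1..M} - card ({1..M} \<inter> Sset)" by (rule card_Diff_subset_Int) simp
    also have "... = M - card (Sset \<inter> {1..M})" by (simp add: Int_commute)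
    finally have c: "card (?N \<inter> {1..M}) \<le> M - card (Sset \<inter> {1..M})" .
    have d: "(1/88) * real M \<le> real (card (Sset \<inter> {1..M}))" using Sset_density M by blast
    have "card (Sset \<inter> {1..M}) \<le> M"
    proof -
      have "card (Sset \<inter> {1..M}) \<le> card {1..M}" by (rule card_mono) auto
      thus ?thesis by simp
    qed
    hence "real (card (?N \<inter> {1..M})) \<le> real M - real (card (Sset \<inter> {1..M}))" using c by linarith
    moreover have "(1 - 1/88) * real M = real M - (1/88) * real M" by (simp add: algebra_simps)
    ultimately show "real (card (?N \<inter> {1..M})) \<le> (1 - 1/88) * real M" using d by linarith
  qed
  have "upper_density ?N \<noteq> 1" by (rule upper_density_ne1[OF _ h]) simp
  thus ?thesis unfolding upper_D1_transitive_c0_def using U0_open U0_ne by blast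
qed

theorem proposition9p9:
  shows "\<exists>w :: nat \<Rightarrow> complex. bounded (range w) \<and>
           frequently_hypercyclic_c0 (wshift w) \<and>
           \<not> upper_D1_transitive_c0 (wshift w)"
  using wts_bounded fhc not_d1 by blast

end
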